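(* Let $f:R\to S$ be a faithfully flat ring homomorphism. If $S$ is Cohen-Macaulay, then so is $R$.
   Context: All rings are commutative with identity. For $x\in R$ let $C(x)$ be the complex $0\to R\to R_x\to 0$ ($R$ in degree $0$, natural localization map); for a finite sequence $\mathbf x=x_1,\dots,x_\ell$ put $C(\mathbf x)=C(x_1)\otimes_R\cdots\otimes_R C(x_\ell)$ and let $H^i_{\mathbf x}(M)$ be the $i$th cohomology of $C(\mathbf x)\otimes_R M$; $\ell(\mathbf x)=\ell$. Let $K(x)$ be $0\to R\xrightarrow{x}R\to 0$ (degrees $1,0$), $K(\mathbf x)=K(x_1)\otimes\cdots\otimes K(x_\ell)$, $H_i(\mathbf x)$ its homology. For $m\ge n$ the chain map $K(\mathbf x^m)\to K(\mathbf x^n)$ ($\mathbf x^m=x_1^m,\dots,x_\ell^m$) is the tensor product of the maps $K(x_i^m)\to K(x_i^n)$ given by multiplication by $x_i^{m-n}$ in degree $1$ and identity in degree $0$. $\mathbf x$ is weakly proregular if for every $n$ there is $m\ge n$ with $H_i(\mathbf x^m)\to H_i(\mathbf x^n)$ zero for all $i\ge1$. $\mathbf x$ is a parameter sequence on $R$ if it is weakly proregular, $(\mathbf x)R\neq R$, and $H^{\ell(\mathbf x)}_{\mathbf x}(R)_p\neq0$ for every prime $p\supseteq(\mathbf x)R$ (the empty sequence is a parameter sequence). It is a strong parameter sequence if $x_1,\dots,x_i$ is a parameter sequence for each $i=1,\dots,\ell(\mathbf x)$. A regular sequence on $M$: each $x_i$ is a non-zero-divisor on $M/(x_1,\dots,x_{i-1})M$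 and $M\neq(\mathbf x)M$. A ring $R$ is Cohen-Macaulay if every strong parameter sequence on $R$ is a regular sequence on $R$. *)

theory Defs
  imports Main
begin

(* Rings: a commutative ring with identity R is rendered as a type 'a :: comm_ring_1
   (the whole type is the ring). Finite sequences x_1,...,x_l are lists, indexed 0..<l. *)

definition ring_homo :: "('a::comm_ring_1 \<Rightarrow> 'b::comm_ring_1) \<Rightarrow> bool" where
  "ring_homo f \<longleftrightarrow> f 1 = 1 \<and> (\<forall>a b. f (a + b) = f a + f b) \<and> (\<forall>a b. f (a * b) = f a * f b)"

definition is_ideal :: "'a::comm_ring_1 set \<Rightarrow> bool" where
  "is_ideal I \<longleftrightarrow> 0 \<in> I \<and> (\<forall>a\<in>I. \<forall>b\<in>I. a + b \<in> I) \<and> (\<forall>r. \<forall>a\<in>I. r * a \<in> I)"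

definition prime_ideal :: "'a::comm_ring_1 set \<Rightarrow> bool" where
  "prime_ideal p \<longleftrightarrow> is_ideal p \<and> p \<noteq> UNIV \<and> (\<forall>a b. a * b \<in> p \<longrightarrow> a \<in> p \<or> b \<in> p)"

definition gen_ideal :: "'a::comm_ring_1 list \<Rightarrow> 'a set" where
  "gen_ideal xs = {y. \<exists>r :: nat \<Rightarrow> 'a. y = (\<Sum>i<length xs. r i * xs ! i)}"

text \<open>Flatness of S over R (via f), by the equational criterion of flatness
  (a relation sum_i a_i y_i = 0 with a_i in R, y_i in S is trivial).\<close>
definition flat_hom :: "('a::comm_ring_1 \<Rightarrow> 'b::comm_ring_1) \<Rightarrow> bool" where
  "flat_hom f \<longleftrightarrow>
     (\<forall>(n::nat) (a :: nat \<Rightarrow> 'a) (y :: nat \<Rightarrow> 'b).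
        (\<Sum>i<n. f (a i) * y i) = 0 \<longrightarrow>
        (\<exists>(m::nat) (b :: nat \<Rightarrow> nat \<Rightarrow> 'a) (z :: nat \<Rightarrow> 'b).
            (\<forall>i<n. y i = (\<Sum>j<m. f (b i j) * z j)) \<and>
            (\<forall>j<m. (\<Sum>i<n. a i * b i j) = 0)))"

definition faithfully_flat_hom :: "('a::comm_ring_1 \<Rightarrow> 'b::comm_ring_1) \<Rightarrow> bool" where
  "faithfully_flat_hom f \<longleftrightarrow> ring_homo f \<and> flat_hom f \<and>
     (\<forall>p :: 'a set. prime_ideal p \<longrightarrow> (\<exists>q :: 'b set. prime_ideal q \<and> f -` q = p))"

text \<open>A chain of degree i is a family of coefficients indexed by the basis vectors
  e_S = e_{j_1} \<otimes> ... \<otimes> e_{j_i} (S = {j_1 < ... < j_i} \<subseteq> {0..<l}); coefficients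
  vanish outside i-element subsets of {0..<l}.\<close>
definition kchain :: "'a::comm_ring_1 list \<Rightarrow> nat \<Rightarrow> (nat set \<Rightarrow> 'a) \<Rightarrow> bool" where
  "kchain xs i c \<longleftrightarrow> (\<forall>S. c S \<noteq> 0 \<longrightarrow> S \<subseteq> {..<length xs} \<and> card S = i)"

text \<open>Differential: d(e_S) = sum over j in S of (-1)^{#{k in S. k < j}} x_j e_{S - {j}}.\<close>
definition kdiff :: "'a::comm_ring_1 list \<Rightarrow> (nat set \<Rightarrow> 'a) \<Rightarrow> (nat set \<Rightarrow> 'a)" where
  "kdiff xs c = (\<lambda>T. if T \<subseteq> {..<length xs} then
       (\<Sum>j\<in>{..<length xs} - T. (-1) ^ card {k\<in>T. k < j} * xs ! j * c (insert j T)) else 0)"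

definition kcycle :: "'a::comm_ring_1 list \<Rightarrow> nat \<Rightarrow> (nat set \<Rightarrow> 'a) \<Rightarrow> bool" where
  "kcycle xs i c \<longleftrightarrow> kchain xs i c \<and> kdiff xs c = (\<lambda>_. 0)"

definition kboundary :: "'a::comm_ring_1 list \<Rightarrow> nat \<Rightarrow> (nat set \<Rightarrow> 'a) \<Rightarrow> bool" where
  "kboundary xs i c \<longleftrightarrow> (\<exists>b. kchain xs (Suc i) b \<and> c = kdiff xs b)"

definition seq_pow :: "'a::comm_ring_1 list \<Rightarrow> nat \<Rightarrow> 'a list" where
  "seq_pow xs n = map (\<lambda>x. x ^ n) xs"

text \<open>The chain map K(x^m) \<rightarrow> K(x^n) (m \<ge> n): on e_S multiplication by prod_{j in S} x_j^(m-n).\<close>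
definition kmap :: "'a::comm_ring_1 list \<Rightarrow> nat \<Rightarrow> nat \<Rightarrow> (nat set \<Rightarrow> 'a) \<Rightarrow> (nat set \<Rightarrow> 'a)" where
  "kmap xs m n c = (\<lambda>S. (\<Prod>j\<in>S. (xs ! j) ^ (m - n)) * c S)"

text \<open>The induced map H_i(x^m) \<rightarrow> H_i(x^n) is zero: cycles are sent to boundaries.\<close>
definition koszul_hom_map_zero :: "'a::comm_ring_1 list \<Rightarrow> nat \<Rightarrow> nat \<Rightarrow> nat \<Rightarrow> bool" where
  "koszul_hom_map_zero xs m n i \<longleftrightarrow>
     (\<forall>z. kcycle (seq_pow xs m) i z \<longrightarrow> kboundary (seq_pow xs n) i (kmap xs m n z))"

definition weakly_proregular :: "'a::comm_ring_1 list \<Rightarrow> bool" where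
  "weakly_proregular xs \<longleftrightarrow>
     (\<forall>n. \<exists>m\<ge>n. \<forall>i\<ge>1. koszul_hom_map_zero xs m n i)"

text \<open>C(x) = C(x_1) \<otimes> ... \<otimes> C(x_l) has C^{l-1} = \<Oplus>_j R_{y_j} with y_j = prod_{i \<noteq> j} x_i
  and C^l = R_x with x = prod_i x_i; H^l_x(R) = R_x / image(C^{l-1}).
  An element of R_x is a fraction r / x^k; the element b_j / y_j^K of R_{y_j} maps
  (up to sign) to b_j x_j^K / x^K in R_x. Fractions in R_x are equal iff
  a / x^k = a' / x^k' \<longleftrightarrow> \<exists>t. x^t (a x^k' - a' x^k) = 0.
  cech_top_zero xs r k: the class of r/x^k in H^l_x(R) is zero.\<close>
definition cech_top_zero :: "'a::comm_ring_1 list \<Rightarrow> 'a \<Rightarrow> nat \<Rightarrow> bool" where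
  "cech_top_zero xs r k \<longleftrightarrow>
     (\<exists>(b :: nat \<Rightarrow> 'a) (K::nat) (t::nat).
        prod_list xs ^ t * (r * prod_list xs ^ K - (\<Sum>j<length xs. b j * (xs ! j) ^ K) * prod_list xs ^ k) = 0)"

text \<open>H^l_x(R)_p \<noteq> 0: some element m/s (s \<notin> p) of the localization is nonzero,
  i.e. there is m \<in> H^l_x(R) with u m \<noteq> 0 for all u \<notin> p. Every m is the class of
  some r/x^k, and u (r/x^k) = (u r)/x^k.\<close>
definition cech_top_local_nonzero :: "'a::comm_ring_1 list \<Rightarrow> 'a set \<Rightarrow> bool" where
  "cech_top_local_nonzero xs p \<longleftrightarrow> (\<exists>r k. \<forall>u. u \<notin> p \<longrightarrow> \<not> cech_top_zero xs (u * r) k)"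

definition parameter_seq :: "'a::comm_ring_1 list \<Rightarrow> bool" where
  "parameter_seq xs \<longleftrightarrow> xs = [] \<or>
     (weakly_proregular xs \<and> gen_ideal xs \<noteq> UNIV \<and>
      (\<forall>p. prime_ideal p \<and> gen_ideal xs \<subseteq> p \<longrightarrow> cech_top_local_nonzero xs p))"

definition strong_parameter_seq :: "'a::comm_ring_1 list \<Rightarrow> bool" where
  "strong_parameter_seq xs \<longleftrightarrow> (\<forall>i\<in>{1..length xs}. parameter_seq (take i xs))"

definition regular_seq :: "'a::comm_ring_1 list \<Rightarrow> bool" where
  "regular_seq xs \<longleftrightarrow>
     (\<forall>i<length xs. \<forall>a. xs ! i * a \<in> gen_ideal (take i xs) \<longrightarrow> a \<in> gen_ideal (take i xs)) \<and>
     gen_ideal xs \<noteq> UNIV"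

definition cohen_macaulay :: "'a::comm_ring_1 itself \<Rightarrow> bool" where
  "cohen_macaulay _ \<longleftrightarrow> (\<forall>xs :: 'a list. strong_parameter_seq xs \<longrightarrow> regular_seq xs)"

end

theory Submission
  imports Defs
begin


context
  fixes f :: "'a::comm_ring_1 \<Rightarrow> 'b::comm_ring_1"
  assumes hom: "ring_homo f"
begin

lemma h_one: "f 1 = 1" using hom unfolding ring_homo_def by blast
lemma h_add: "f (a + b) = f a + f b" using hom unfolding ring_homo_def by blast
lemma h_mult: "f (a * b) = f a * f b" using hom unfolding ring_homo_def by blast
lemma h_zero: "f 0 = 0"
proof -
  have "f (0 + 0) = f 0 + f 0" by (rule h_add)
  then show ?thesis by simp
qed
lemma h_neg: "f (- a) = - f a"
proof -
  have "f (a + - a) = f a + f (- a)" by (rule h_add)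
  then have "f a + f (- a) = 0" by (simp add: h_zero)
  then show ?thesis by (simp add: add_eq_0_iff)
qed
lemma h_diff: "f (a - b) = f a - f b"
  using h_add[of a "- b"] h_neg[of b] by simp
lemma h_sum: "f (sum g A) = (\<Sum>x\<in>A. f (g x))"
  by (induction A rule: infinite_finite_induct) (auto simp: h_zero h_add)
lemma h_prod: "f (prod g A) = (\<Prod>x\<in>A. f (g x))"
  by (induction A rule: infinite_finite_induct) (auto simp: h_one h_mult)
lemma h_pow: "f (a ^ n) = f a ^ n"
  by (induction n) (auto simp: h_one h_mult)
lemma h_prod_list: "f (prod_list xs) = prod_list (map f xs)"
  by (induction xs) (auto simp: h_one h_mult)
lemma h_sign: "f ((-1) ^ n) = (-1) ^ n"
  by (simp add: h_pow h_neg h_one)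

lemma gen_ideal_map: "a \<in> gen_ideal xs \<Longrightarrow> f a \<in> gen_ideal (map f xs)"
proof -
  assume "a \<in> gen_ideal xs"
  then obtain r where r: "a = (\<Sum>i<length xs. r i * xs ! i)" unfolding gen_ideal_def by blast
  have "f a = (\<Sum>i<length (map f xs). f (r i) * map f xs ! i)"
    unfolding r h_sum by (auto simp: h_mult intro!: sum.cong)
  then show ?thesis unfolding gen_ideal_def by (intro CollectI exI)
qed

lemma seq_pow_map: "seq_pow (map f xs) n = map f (seq_pow xs n)"
  unfolding seq_pow_def by (simp add: h_pow)

end

lemma ideal_sum: "is_ideal q \<Longrightarrow> (\<And>j. j \<in> A \<Longrightarrow> g j \<in> q) \<Longrightarrow> sum g A \<in> q"
  unfolding is_ideal_def
  by (induction A rule: infinite_finite_induct) auto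

lemma ideal_mult_right: "is_ideal q \<Longrightarrow> a \<in> q \<Longrightarrow> a * r \<in> q"
  unfolding is_ideal_def by (metis mult.commute)

lemma ideal_one: "is_ideal q \<Longrightarrow> 1 \<in> q \<Longrightarrow> q = UNIV"
  unfolding is_ideal_def by (metis UNIV_eq_I mult.right_neutral)

lemma is_ideal_gen: "is_ideal (gen_ideal xs)"
  unfolding is_ideal_def gen_ideal_def
proof (intro conjI ballI allI)
  show "0 \<in> {y. \<exists>r. y = (\<Sum>i<length xs. r i * xs ! i)}"
    by (rule CollectI, rule exI[of _ "\<lambda>_. 0"]) simp
next
  fix a b assume "a \<in> {y. \<exists>r. y = (\<Sum>i<length xs. r i * xs ! i)}"
    "b \<in> {y. \<exists>r. y = (\<Sum>i<length xs. r i * xs ! i)}"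
  then obtain r s where "a = (\<Sum>i<length xs. r i * xs ! i)" "b = (\<Sum>i<length xs. s i * xs ! i)" by blast
  then have "a + b = (\<Sum>i<length xs. (r i + s i) * xs ! i)" by (simp add: sum.distrib distrib_right)
  then show "a + b \<in> {y. \<exists>r. y = (\<Sum>i<length xs. r i * xs ! i)}" by (intro CollectI exI)
next
  fix c a assume "a \<in> {y. \<exists>r. y = (\<Sum>i<length xs. r i * xs ! i)}"
  then obtain r where "a = (\<Sum>i<length xs. r i * xs ! i)" by blast
  then have "c * a = (\<Sum>i<length xs. (c * r i) * xs ! i)" by (simp add: sum_distrib_left mult.assoc)
  then show "c * a \<in> {y. \<exists>r. y = (\<Sum>i<length xs. r i * xs ! i)}" by (intro CollectI exI)
qed

lemma gen_ideal_sub: "is_ideal q \<Longrightarrow> (\<And>i. i < length xs \<Longrightarrow> xs ! i \<in> q) \<Longrightarrow> gen_ideal xs \<subseteq> q"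
  unfolding gen_ideal_def
  by (auto intro!: ideal_sum simp: is_ideal_def)

lemma prime_exists:
  fixes J :: "'a::comm_ring_1 set"
  assumes J: "is_ideal J" "1 \<notin> J"
  shows "\<exists>p. prime_ideal p \<and> J \<subseteq> p"
proof -
  define A where "A = {I::'a set. is_ideal I \<and> J \<subseteq> I \<and> 1 \<notin> I}"
  have "\<exists>M\<in>A. \<forall>X\<in>A. M \<subseteq> X \<longrightarrow> X = M"
  proof (rule Zorn_Lemma2, intro ballI)
    fix C assume C: "C \<in> chains A"
    show "\<exists>U\<in>A. \<forall>X\<in>C. X \<subseteq> U"
    proof (cases "C = {}")
      case True then show ?thesis using J by (auto simp: A_def)
    next
      case False
      have CA: "C \<subseteq> A" and ch: "\<And>X Y. X \<in> C \<Longrightarrow> Y \<in> C \<Longrightarrow> X \<subseteq> Y \<or> Y \<subseteq> X"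
        using C unfolding chains_def chain_subset_def by auto
      have "is_ideal (\<Union>C)"
        unfolding is_ideal_def
      proof (intro conjI ballI allI)
        show "0 \<in> \<Union>C" using False CA by (auto simp: A_def is_ideal_def)
      next
        fix a b assume "a \<in> \<Union>C" "b \<in> \<Union>C"
        then obtain X Y where XY: "X \<in> C" "Y \<in> C" "a \<in> X" "b \<in> Y" by blast
        show "a + b \<in> \<Union>C"
        proof (cases "X \<subseteq> Y")
          case True then have "a \<in> Y" using XY by blast
          moreover have "is_ideal Y" using XY CA by (auto simp: A_def)
          ultimately have "a + b \<in> Y" using XY unfolding is_ideal_def by blast
          then show ?thesis using XY by blast
        next
          case False then have "Y \<subseteq> X" using ch XY by blast
          then have "b \<in> X" using XY by blast
          moreover have "is_ideal X" using XY CA by (auto simp: A_def)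
          ultimately have "a + b \<in> X" using XY unfolding is_ideal_def by blast
          then show ?thesis using XY by blast
        qed
      next
        fix r a assume "a \<in> \<Union>C"
        then obtain X where X: "X \<in> C" "a \<in> X" by blast
        then have "is_ideal X" using CA by (auto simp: A_def)
        then have "r * a \<in> X" using X unfolding is_ideal_def by blast
        then show "r * a \<in> \<Union>C" using X by blast
      qed
      moreover have "J \<subseteq> \<Union>C" "1 \<notin> \<Union>C" using False CA by (auto simp: A_def)
      ultimately show ?thesis unfolding A_def by blast
    qed
  qed
  then obtain M where MA: "M \<in> A" and max0: "\<forall>X\<in>A. M \<subseteq> X \<longrightarrow> X = M"
    by blast
  have M: "is_ideal M" "J \<subseteq> M" "1 \<notin> M" using MA unfolding A_def by auto
  have max: "X = M" if "is_ideal X" "J \<subseteq> X" "1 \<notin> X" "M \<subseteq> X" for X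
  proof -
    have "X \<in> A" using that unfolding A_def by simp
    then show ?thesis using max0 that(4) by blast
  qed
  have ext: "\<exists>m r. m \<in> M \<and> 1 = m + r * a" if "a \<notin> M" for a
  proof (rule ccontr)
    define X where "X = {y. \<exists>m r. m \<in> M \<and> y = m + r * a}"
    assume n0: "\<not> (\<exists>m r. m \<in> M \<and> 1 = m + r * a)"
    then have n1: "1 \<notin> X" unfolding X_def by simp
    have "is_ideal X" unfolding is_ideal_def
    proof (intro conjI ballI allI)
      have "0 \<in> M" using M(1) unfolding is_ideal_def by blast
      then have "0 \<in> M \<and> (0::'a) = 0 + 0 * a" by simp
      then show "0 \<in> X" unfolding X_def by blast
    next
      fix u v assume "u \<in> X" "v \<in> X"
      then obtain m1 r1 m2 r2 where "u = m1 + r1 * a" "v = m2 + r2 * a" "m1 \<in> M" "m2 \<in> M"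
        unfolding X_def by blast
      then have "u + v = (m1 + m2) + (r1 + r2) * a" "m1 + m2 \<in> M" using M(1)
        by (auto simp: algebra_simps is_ideal_def)
      then show "u + v \<in> X" unfolding X_def by blast
    next
      fix s u assume "u \<in> X"
      then obtain m1 r1 where "u = m1 + r1 * a" "m1 \<in> M" unfolding X_def by blast
      then have "s * u = s * m1 + (s * r1) * a" "s * m1 \<in> M"
        using M(1) unfolding is_ideal_def by (simp add: algebra_simps, blast)
      then show "s * u \<in> X" unfolding X_def by blast
    qed
    moreover have "M \<subseteq> X"
    proof
      fix y assume "y \<in> M"
      then have "y \<in> M \<and> y = y + 0 * a" by simp
      then show "y \<in> X" unfolding X_def by blast
    qed
    moreover have "a \<in> X"
    proof -
      have "0 \<in> M" using M(1) unfolding is_ideal_def by blast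
      then have "0 \<in> M \<and> a = 0 + 1 * a" by simp
      then show ?thesis unfolding X_def by blast
    qed
    ultimately have "X = M" using max n1 M(2) by blast
    then show False using \<open>a \<in> X\<close> that by blast
  qed
  have "prime_ideal M" unfolding prime_ideal_def
  proof (intro conjI allI impI)
    show "is_ideal M" by (rule M)
    show "M \<noteq> UNIV" using M by blast
    fix a b assume ab: "a * b \<in> M"
    show "a \<in> M \<or> b \<in> M"
    proof (rule ccontr)
      assume "\<not> (a \<in> M \<or> b \<in> M)"
      then obtain m1 r1 m2 r2 where e: "1 = m1 + r1 * a" "1 = m2 + r2 * b" "m1 \<in> M" "m2 \<in> M"
        using ext by blast
      have "(1::'a) = (m1 + r1 * a) * (m2 + r2 * b)" using e by simp
      also have "\<dots> = m1 * (m2 + r2 * b) + (r1 * a) * m2 + (r1 * r2) * (a * b)" by (simp add: algebra_simps)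
      also have "\<dots> \<in> M"
      proof -
        have i: "is_ideal M" by (rule M)
        have "m1 * (m2 + r2 * b) \<in> M" using ideal_mult_right[OF i e(3)] .
        moreover have "(r1 * a) * m2 \<in> M" using i e(4) unfolding is_ideal_def by blast
        moreover have "(r1 * r2) * (a * b) \<in> M" using i ab unfolding is_ideal_def by blast
        ultimately show ?thesis using i unfolding is_ideal_def by blast
      qed
      finally show False using M by blast
    qed
  qed
  then show ?thesis using M by blast
qed



lemma contraction:
  fixes f :: "'a::comm_ring_1 \<Rightarrow> 'b::comm_ring_1"
  assumes ff: "faithfully_flat_hom f" and fa: "f a \<in> gen_ideal (map f ys)"
  shows "a \<in> gen_ideal ys"
proof (rule ccontr)
  assume na: "a \<notin> gen_ideal ys"
  have hom: "ring_homo f" and fl: "flat_hom f"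
    and sp: "\<And>p. prime_ideal p \<Longrightarrow> \<exists>q. prime_ideal q \<and> f -` q = p"
    using ff unfolding faithfully_flat_hom_def by auto
  define J where "J = {b. b * a \<in> gen_ideal ys}"
  have gi: "is_ideal (gen_ideal ys)" by (rule is_ideal_gen)
  have "is_ideal J" unfolding is_ideal_def J_def
  proof (intro conjI ballI allI)
    show "0 \<in> {b. b * a \<in> gen_ideal ys}" using gi unfolding is_ideal_def by simp
  next
    fix u v assume "u \<in> {b. b * a \<in> gen_ideal ys}" "v \<in> {b. b * a \<in> gen_ideal ys}"
    then show "u + v \<in> {b. b * a \<in> gen_ideal ys}" using gi unfolding is_ideal_def
      by (simp add: distrib_right)
  next
    fix r u assume "u \<in> {b. b * a \<in> gen_ideal ys}"
    then show "r * u \<in> {b. b * a \<in> gen_ideal ys}" using gi unfolding is_ideal_def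
      by (simp add: mult.assoc)
  qed
  moreover have "1 \<notin> J" using na unfolding J_def by simp
  ultimately obtain p where p: "prime_ideal p" "J \<subseteq> p" using prime_exists by blast
  obtain q where q: "prime_ideal q" "f -` q = p" using sp[OF p(1)] by blast
  obtain s where s: "f a = (\<Sum>i<length (map f ys). s i * map f ys ! i)"
    using fa unfolding gen_ideal_def by blast
  define l where "l = length ys"
  define a' where "a' = (\<lambda>i. if i = 0 then a else - (ys ! (i - 1)))"
  define y' where "y' = (\<lambda>i. if i = 0 then 1 else s (i - 1))"
  have "(\<Sum>i<Suc l. f (a' i) * y' i) = f (a' 0) * y' 0 + (\<Sum>i<l. f (a' (Suc i)) * y' (Suc i))"
    by (rule sum.lessThan_Suc_shift)
  also have "\<dots> = f a - (\<Sum>i<l. s i * f (ys ! i))"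
    by (simp add: a'_def y'_def h_neg[OF hom] sum_negf mult.commute)
  also have "\<dots> = 0" using s by (simp add: l_def)
  finally have rel: "(\<Sum>i<Suc l. f (a' i) * y' i) = 0" .
  obtain m :: nat and \<beta> z where bz: "\<forall>i<Suc l. y' i = (\<Sum>j<m. f (\<beta> i j) * z j)"
    and br: "\<forall>j<m. (\<Sum>i<Suc l. a' i * \<beta> i j) = 0"
    using fl[unfolded flat_hom_def, rule_format, OF rel] by (elim exE conjE) blast
  have inJ: "\<beta> 0 j \<in> J" if "j < m" for j
  proof -
    have "0 = (\<Sum>i<Suc l. a' i * \<beta> i j)" using br that by simp
    also have "\<dots> = a * \<beta> 0 j - (\<Sum>i<l. \<beta> (Suc i) j * ys ! i)"
      by (simp del: sum.lessThan_Suc add: sum.lessThan_Suc_shift a'_def sum_negf mult.commute)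
    finally have "\<beta> 0 j * a = (\<Sum>i<length ys. \<beta> (Suc i) j * ys ! i)"
      by (simp add: l_def mult.commute)
    then show ?thesis unfolding J_def gen_ideal_def by (intro CollectI exI)
  qed
  have qi: "is_ideal q" using q unfolding prime_ideal_def by blast
  have "(1::'b) = (\<Sum>j<m. f (\<beta> 0 j) * z j)" using bz[rule_format, of 0] by (simp add: y'_def)
  also have "\<dots> \<in> q"
  proof (rule ideal_sum[OF qi])
    fix j assume "j \<in> {..<m}"
    then have "f (\<beta> 0 j) \<in> q" using inJ p(2) q(2) by auto
    then show "f (\<beta> 0 j) * z j \<in> q" by (rule ideal_mult_right[OF qi])
  qed
  finally have "q = UNIV" using ideal_one[OF qi] by blast
  then show False using q unfolding prime_ideal_def by blast
qed

lemma flat_system: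
  fixes f :: "'a::comm_ring_1 \<Rightarrow> 'b::comm_ring_1"
    and a :: "'e \<Rightarrow> 'j \<Rightarrow> 'a" and z :: "'i \<Rightarrow> 'b"
  assumes hom: "ring_homo f" and fl: "flat_hom f" and fE: "finite E" and fI: "finite I"
    and fJ: "\<forall>e\<in>E. finite (J e)" and sI: "\<forall>e\<in>E. \<forall>j\<in>J e. \<sigma> e j \<in> I"
    and eq: "\<forall>e\<in>E. (\<Sum>j\<in>J e. f (a e j) * z (\<sigma> e j)) = 0"
  shows "\<exists>m (B :: nat \<Rightarrow> 'i \<Rightarrow> 'a) w. (\<forall>i\<in>I. z i = (\<Sum>k<m. f (B k i) * w k)) \<and>
           (\<forall>k<m. \<forall>e\<in>E. (\<Sum>j\<in>J e. a e j * B k (\<sigma> e j)) = 0)"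
  using fE fJ sI eq
proof (induction E rule: finite_induct)
  case empty
  obtain h where h: "bij_betw h {0..<card I} I" using ex_bij_betw_nat_finite[OF fI] by blast
  define B where "B = (\<lambda>k i. if h k = i then (1::'a) else 0)"
  have "z i = (\<Sum>k<card I. f (B k i) * z (h k))" if "i \<in> I" for i
  proof -
    have "(\<Sum>k<card I. f (B k i) * z (h k)) = (\<Sum>k\<in>{0..<card I}. (\<lambda>i'. f (if i' = i then 1 else 0) * z i') (h k))"
      by (simp add: B_def atLeast0LessThan)
    also have "\<dots> = (\<Sum>i'\<in>I. f (if i' = i then 1 else 0) * z i')"
      by (rule sum.reindex_bij_betw[OF h])
    also have "\<dots> = (\<Sum>i'\<in>I. if i' = i then z i else 0)"
      by (rule sum.cong) (auto simp: h_one[OF hom] h_zero[OF hom])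
    also have "\<dots> = z i" using that fI by simp
    finally show ?thesis by simp
  qed
  then show ?case by (intro exI[of _ "card I"] exI[of _ B] exI[of _ "\<lambda>k. z (h k)"]) auto
next
  case (insert e E)
  have p1: "\<forall>e\<in>E. finite (J e)" "\<forall>e\<in>E. \<forall>j\<in>J e. \<sigma> e j \<in> I"
    "\<forall>e\<in>E. (\<Sum>j\<in>J e. f (a e j) * z (\<sigma> e j)) = 0" using insert.prems by auto
  obtain m :: nat and B w where
    zr: "\<forall>i\<in>I. z i = (\<Sum>k<m. f (B k i) * w k)" and
    Br: "\<forall>k<m. \<forall>e\<in>E. (\<Sum>j\<in>J e. a e j * B k (\<sigma> e j)) = 0"
    using insert.IH[OF p1] by (elim exE conjE) blast
  define a' where "a' = (\<lambda>k. \<Sum>j\<in>J e. a e j * B k (\<sigma> e j))"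
  have fJe: "finite (J e)" using insert.prems by auto
  have "0 = (\<Sum>j\<in>J e. f (a e j) * z (\<sigma> e j))" using insert.prems by auto
  also have "\<dots> = (\<Sum>j\<in>J e. f (a e j) * (\<Sum>k<m. f (B k (\<sigma> e j)) * w k))"
    using insert.prems zr by (intro sum.cong) auto
  also have "\<dots> = (\<Sum>k<m. f (a' k) * w k)"
    unfolding a'_def h_sum[OF hom] h_mult[OF hom]
    by (simp add: sum_distrib_left sum_distrib_right mult.assoc sum.swap[of _ "J e"])
  finally have rel: "(\<Sum>k<m. f (a' k) * w k) = 0" by simp
  obtain m2 :: nat and C v where wC: "\<forall>k<m. w k = (\<Sum>l<m2. f (C k l) * v l)"
    and Cr: "\<forall>l<m2. (\<Sum>k<m. a' k * C k l) = 0"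
    using fl[unfolded flat_hom_def, rule_format, OF rel] by (elim exE conjE) blast
  define B2 where "B2 = (\<lambda>l i. \<Sum>k<m. B k i * C k l)"
  have "z i = (\<Sum>l<m2. f (B2 l i) * v l)" if "i \<in> I" for i
  proof -
    have "z i = (\<Sum>k<m. f (B k i) * (\<Sum>l<m2. f (C k l) * v l))"
      using zr wC that by simp
    also have "\<dots> = (\<Sum>l<m2. f (B2 l i) * v l)"
      unfolding B2_def h_sum[OF hom] h_mult[OF hom]
      by (simp add: sum_distrib_left sum_distrib_right mult.assoc sum.swap[of _ "{..<m}"])
    finally show ?thesis .
  qed
  moreover have "(\<Sum>j\<in>J e'. a e' j * B2 l (\<sigma> e' j)) = 0" if "l < m2" "e' \<in> insert e E" for l e'
  proof -
    have "(\<Sum>j\<in>J e'. a e' j * B2 l (\<sigma> e' j)) = (\<Sum>k<m. (\<Sum>j\<in>J e'. a e' j * B k (\<sigma> e' j)) * C k l)"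
      unfolding B2_def
      by (simp add: sum_distrib_left sum_distrib_right mult.assoc sum.swap[of _ "{..<m}"])
    also have "\<dots> = 0"
    proof (cases "e' = e")
      case True then show ?thesis using Cr that by (simp add: a'_def)
    next
      case False then show ?thesis using Br that by simp
    qed
    finally show ?thesis .
  qed
  ultimately show ?case by blast
qed



lemma length_seq_pow[simp]: "length (seq_pow xs n) = length xs"
  by (simp add: seq_pow_def)

lemma kdiff_lin:
  fixes f :: "'a::comm_ring_1 \<Rightarrow> 'b::comm_ring_1"
  assumes hom: "ring_homo f"
  shows "kdiff (map f xs) (\<lambda>S. \<Sum>k<m. f (c k S) * w k) = (\<lambda>T. \<Sum>k<m. f (kdiff xs (c k) T) * w k)"
proof (rule ext)
  fix T
  show "kdiff (map f xs) (\<lambda>S. \<Sum>k<m. f (c k S) * w k) T = (\<Sum>k<m. f (kdiff xs (c k) T) * w k)"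
  proof (cases "T \<subseteq> {..<length xs}")
    case True
    have "kdiff (map f xs) (\<lambda>S. \<Sum>k<m. f (c k S) * w k) T =
      (\<Sum>j\<in>{..<length xs} - T. (-1) ^ card {k\<in>T. k < j} * f (xs ! j) * (\<Sum>k<m. f (c k (insert j T)) * w k))"
      unfolding kdiff_def using True by (auto intro!: sum.cong)
    also have "\<dots> = (\<Sum>k<m. f (kdiff xs (c k) T) * w k)"
      unfolding kdiff_def using True
      by (simp add: h_sum[OF hom] h_mult[OF hom] h_sign[OF hom] sum_distrib_left sum_distrib_right
          mult.assoc sum.swap[of _ "{..<m}"])
    finally show ?thesis .
  qed (simp add: kdiff_def h_zero[OF hom])
qed

lemma wpr_map:
  fixes f :: "'a::comm_ring_1 \<Rightarrow> 'b::comm_ring_1"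
  assumes hom: "ring_homo f" and fl: "flat_hom f" and wp: "weakly_proregular xs"
  shows "weakly_proregular (map f xs)"
  unfolding weakly_proregular_def
proof (intro allI)
  fix n
  obtain m where m: "m \<ge> n" "\<forall>i\<ge>1. koszul_hom_map_zero xs m n i"
    using wp unfolding weakly_proregular_def by blast
  have "koszul_hom_map_zero (map f xs) m n i" if i1: "i \<ge> 1" for i
    unfolding koszul_hom_map_zero_def
  proof (intro allI impI)
    fix z assume zc: "kcycle (seq_pow (map f xs) m) i z"
    define ys where "ys = seq_pow xs m"
    define l where "l = length xs"
    have lys: "length ys = l" by (simp add: ys_def l_def)
    have zch: "\<And>S. z S \<noteq> 0 \<Longrightarrow> S \<subseteq> {..<l} \<and> card S = i"
      using zc unfolding kcycle_def kchain_def by (simp add: l_def)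
    have zd: "kdiff (map f ys) z = (\<lambda>_. 0)"
      using zc unfolding kcycle_def by (simp add: ys_def seq_pow_map[OF hom])
    define I where "I = {S. S \<subseteq> {..<l} \<and> card S = i}"
    define E where "E = {T. T \<subseteq> {..<l} \<and> Suc (card T) = i}"
    define J where "J = (\<lambda>T::nat set. {..<l} - T)"
    define \<sigma> where "\<sigma> = (\<lambda>(T::nat set) j. insert j T)"
    define a where "a = (\<lambda>(T::nat set) j. (-1) ^ card {k\<in>T. k < j} * ys ! j)"
    have fI: "finite I" unfolding I_def by (rule finite_subset[of _ "Pow {..<l}"]) auto
    have fE: "finite E" unfolding E_def by (rule finite_subset[of _ "Pow {..<l}"]) auto
    have fJ: "\<forall>e\<in>E. finite (J e)" unfolding J_def by simp
    have sI: "\<forall>e\<in>E. \<forall>j\<in>J e. \<sigma> e j \<in> I"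
    proof (intro ballI)
      fix T j assume T: "T \<in> E" and j: "j \<in> J T"
      have fT: "finite T" using T unfolding E_def by (auto intro: finite_subset)
      show "\<sigma> T j \<in> I" using T j fT unfolding E_def J_def I_def \<sigma>_def by auto
    qed
    have eq: "\<forall>e\<in>E. (\<Sum>j\<in>J e. f (a e j) * z (\<sigma> e j)) = 0"
    proof
      fix T assume T: "T \<in> E"
      have "(\<Sum>j\<in>J T. f (a T j) * z (\<sigma> T j)) = kdiff (map f ys) z T"
        using T unfolding kdiff_def E_def J_def \<sigma>_def a_def
        by (auto simp: lys h_mult[OF hom] h_sign[OF hom] intro!: sum.cong)
      then show "(\<Sum>j\<in>J T. f (a T j) * z (\<sigma> T j)) = 0" using zd by simp
    qed
    obtain m' :: nat and B w where
      zr: "\<forall>S\<in>I. z S = (\<Sum>k<m'. f (B k S) * w k)" and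
      Br: "\<forall>k<m'. \<forall>T\<in>E. (\<Sum>j\<in>J T. a T j * B k (\<sigma> T j)) = 0"
      using flat_system[OF hom fl fE fI fJ sI eq] by (elim exE conjE) blast
    define B' where "B' = (\<lambda>k S. if S \<in> I then B k S else 0)"
    have zrep: "z = (\<lambda>S. \<Sum>k<m'. f (B' k S) * w k)"
    proof (rule ext)
      fix S show "z S = (\<Sum>k<m'. f (B' k S) * w k)"
      proof (cases "S \<in> I")
        case True then show ?thesis using zr by (simp add: B'_def)
      next
        case False
        then have "z S = 0" using zch unfolding I_def by blast
        then show ?thesis using False by (simp add: B'_def h_zero[OF hom])
      qed
    qed
    have cyc: "kcycle ys i (B' k)" if "k < m'" for k
      unfolding kcycle_def
    proof
      show "kchain ys i (B' k)" unfolding kchain_def B'_def I_def by (auto simp: lys)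
      show "kdiff ys (B' k) = (\<lambda>_. 0)"
      proof (rule ext)
        fix T
        show "kdiff ys (B' k) T = 0"
        proof (cases "T \<subseteq> {..<l}")
          case Tl: True
          have fT: "finite T" using Tl by (auto intro: finite_subset)
          show ?thesis
          proof (cases "Suc (card T) = i")
            case True
            then have TE: "T \<in> E" using Tl unfolding E_def by simp
            have "kdiff ys (B' k) T = (\<Sum>j\<in>J T. a T j * B k (\<sigma> T j))"
              unfolding kdiff_def using Tl sI TE
              by (auto simp: lys J_def a_def B'_def \<sigma>_def mult.assoc intro!: sum.cong)
            then show ?thesis using Br that TE by simp
          next
            case False
            have "kdiff ys (B' k) T = (\<Sum>j\<in>{..<l} - T. 0)"
              unfolding kdiff_def using Tl False fT
              by (auto simp: lys B'_def I_def intro!: sum.cong)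
            then show ?thesis by simp
          qed
        qed (simp add: kdiff_def lys)
      qed
    qed
    have "\<forall>k. \<exists>c. k < m' \<longrightarrow> kchain (seq_pow xs n) (Suc i) c \<and> kmap xs m n (B' k) = kdiff (seq_pow xs n) c"
    proof
      fix k
      show "\<exists>c. k < m' \<longrightarrow> kchain (seq_pow xs n) (Suc i) c \<and> kmap xs m n (B' k) = kdiff (seq_pow xs n) c"
      proof (cases "k < m'")
        case True
        then have "kboundary (seq_pow xs n) i (kmap xs m n (B' k))"
          using m(2) i1 cyc[OF True] unfolding koszul_hom_map_zero_def ys_def by blast
        then show ?thesis unfolding kboundary_def by blast
      qed simp
    qed
    then obtain c where c: "\<And>k. k < m' \<Longrightarrow> kchain (seq_pow xs n) (Suc i) (c k) \<and> kmap xs m n (B' k) = kdiff (seq_pow xs n) (c k)"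
      by metis
    define C where "C = (\<lambda>S. \<Sum>k<m'. f (c k S) * w k)"
    have "kchain (seq_pow (map f xs) n) (Suc i) C"
      unfolding kchain_def
    proof (intro allI impI)
      fix S assume "C S \<noteq> 0"
      then obtain k where k: "k < m'" "c k S \<noteq> 0" unfolding C_def
        by (metis (no_types, lifting) h_zero[OF hom] lessThan_iff mult_zero_left sum.neutral)
      then show "S \<subseteq> {..<length (seq_pow (map f xs) n)} \<and> card S = Suc i"
        using c[OF k(1)] unfolding kchain_def by simp
    qed
    moreover have "kmap (map f xs) m n z = kdiff (seq_pow (map f xs) n) C"
    proof -
      have "kdiff (seq_pow (map f xs) n) C = (\<lambda>T. \<Sum>k<m'. f (kdiff (seq_pow xs n) (c k) T) * w k)"
        unfolding seq_pow_map[OF hom] C_def by (rule kdiff_lin[OF hom])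
      also have "\<dots> = (\<lambda>T. \<Sum>k<m'. f (kmap xs m n (B' k) T) * w k)"
        using c by (auto intro!: sum.cong)
      also have "\<dots> = kmap (map f xs) m n z"
      proof (rule ext)
        fix T
        show "(\<Sum>k<m'. f (kmap xs m n (B' k) T) * w k) = kmap (map f xs) m n z T"
        proof (cases "T \<subseteq> {..<l}")
          case True
          have "kmap (map f xs) m n z T = (\<Prod>j\<in>T. f (xs ! j) ^ (m - n)) * (\<Sum>k<m'. f (B' k T) * w k)"
          proof -
            have "(\<Prod>j\<in>T. map f xs ! j ^ (m - n)) = (\<Prod>j\<in>T. f (xs ! j) ^ (m - n))"
              using True by (intro prod.cong) (auto simp: l_def)
            then show ?thesis unfolding kmap_def zrep by simp
          qed
          then show ?thesis
            unfolding kmap_def by (simp add: h_mult[OF hom] h_prod[OF hom] h_pow[OF hom] sum_distrib_left mult.assoc)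
        next
          case False
          then have "T \<notin> I" unfolding I_def by blast
          then show ?thesis unfolding kmap_def zrep by (simp add: B'_def h_zero[OF hom] h_mult[OF hom])
        qed
      qed
      finally show ?thesis by simp
    qed
    ultimately show "kboundary (seq_pow (map f xs) n) i (kmap (map f xs) m n z)"
      unfolding kboundary_def by blast
  qed
  then show "\<exists>m\<ge>n. \<forall>i\<ge>1. koszul_hom_map_zero (map f xs) m n i" using m(1) by blast
qed



lemma preimage_prime:
  fixes f :: "'a::comm_ring_1 \<Rightarrow> 'b::comm_ring_1"
  assumes hom: "ring_homo f" and q: "prime_ideal q"
  shows "prime_ideal (f -` q)"
proof -
  have qi: "is_ideal q" and qU: "q \<noteq> UNIV" and qp: "\<And>a b. a * b \<in> q \<Longrightarrow> a \<in> q \<or> b \<in> q"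
    using q unfolding prime_ideal_def by auto
  have "1 \<notin> q" using ideal_one[OF qi] qU by blast
  then have "1 \<notin> f -` q" by (simp add: h_one[OF hom])
  then have "f -` q \<noteq> UNIV" by blast
  moreover have "is_ideal (f -` q)" using qi unfolding is_ideal_def
    by (simp add: h_zero[OF hom] h_add[OF hom] h_mult[OF hom])
  moreover have "\<forall>a b. a * b \<in> f -` q \<longrightarrow> a \<in> f -` q \<or> b \<in> f -` q"
    using qp by (simp add: h_mult[OF hom])
  ultimately show ?thesis unfolding prime_ideal_def by blast
qed

lemma cech_map:
  fixes f :: "'a::comm_ring_1 \<Rightarrow> 'b::comm_ring_1"
  assumes hom: "ring_homo f" and fl: "flat_hom f" and q: "prime_ideal q"
    and H0: "cech_top_local_nonzero ys (f -` q)"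
  shows "cech_top_local_nonzero (map f ys) q"
proof -
  have qi: "is_ideal q" using q unfolding prime_ideal_def by blast
  obtain r k where H: "\<And>u. u \<notin> f -` q \<Longrightarrow> \<not> cech_top_zero ys (u * r) k"
    using H0 unfolding cech_top_local_nonzero_def by blast
  define l where "l = length ys"
  define x where "x = prod_list ys"
  have Fx: "prod_list (map f ys) = f x" unfolding x_def by (simp add: h_prod_list[OF hom])
  have "\<not> cech_top_zero (map f ys) (v * f r) k" if v: "v \<notin> q" for v
  proof
    assume "cech_top_zero (map f ys) (v * f r) k"
    then obtain b K t where e0: "prod_list (map f ys) ^ t * (v * f r * prod_list (map f ys) ^ K -
        (\<Sum>j<length (map f ys). b j * (map f ys ! j) ^ K) * prod_list (map f ys) ^ k) = 0"
      unfolding cech_top_zero_def by blast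
    have sumeq: "(\<Sum>j<length (map f ys). b j * (map f ys ! j) ^ K) = (\<Sum>j<l. b j * f (ys ! j) ^ K)"
      by (auto simp: l_def intro!: sum.cong)
    have e1: "f x ^ t * f r * f x ^ K * v - (\<Sum>j<l. f x ^ t * f (ys ! j) ^ K * f x ^ k * b j) = 0"
    proof -
      have "f x ^ t * f r * f x ^ K * v - (\<Sum>j<l. f x ^ t * f (ys ! j) ^ K * f x ^ k * b j)
          = f x ^ t * (v * f r * f x ^ K - (\<Sum>j<l. b j * f (ys ! j) ^ K) * f x ^ k)"
        by (simp add: sum_distrib_left sum_distrib_right right_diff_distrib ac_simps)
      also have "\<dots> = 0" using e0 unfolding Fx sumeq .
      finally show ?thesis .
    qed
    define a' where "a' = (\<lambda>i. if i = 0 then x ^ t * r * x ^ K else - (x ^ t * ys ! (i - 1) ^ K * x ^ k))"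
    define y' where "y' = (\<lambda>i. if i = 0 then v else b (i - 1))"
    have "(\<Sum>i<Suc l. f (a' i) * y' i) = f (a' 0) * y' 0 + (\<Sum>i<l. f (a' (Suc i)) * y' (Suc i))"
      by (rule sum.lessThan_Suc_shift)
    also have "\<dots> = f x ^ t * f r * f x ^ K * v - (\<Sum>j<l. f x ^ t * f (ys ! j) ^ K * f x ^ k * b j)"
      by (simp add: a'_def y'_def h_neg[OF hom] h_mult[OF hom] h_pow[OF hom] sum_negf)
    also have "\<dots> = 0" by (rule e1)
    finally have rel: "(\<Sum>i<Suc l. f (a' i) * y' i) = 0" .
    obtain m :: nat and \<beta> z where bz: "\<forall>i<Suc l. y' i = (\<Sum>j<m. f (\<beta> i j) * z j)"
      and br: "\<forall>j<m. (\<Sum>i<Suc l. a' i * \<beta> i j) = 0"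
      using fl[unfolded flat_hom_def, rule_format, OF rel] by (elim exE conjE) blast
    have vs: "v = (\<Sum>j<m. f (\<beta> 0 j) * z j)" using bz[rule_format, of 0] by (simp add: y'_def)
    obtain j where j: "j < m" "f (\<beta> 0 j) \<notin> q"
    proof (rule ccontr)
      assume "\<not> thesis"
      then have "\<forall>j<m. f (\<beta> 0 j) \<in> q" using that by blast
      then have "(\<Sum>j<m. f (\<beta> 0 j) * z j) \<in> q"
        by (intro ideal_sum[OF qi] ideal_mult_right[OF qi]) auto
      then show False using v vs by simp
    qed
    have "cech_top_zero ys (\<beta> 0 j * r) k"
      unfolding cech_top_zero_def
    proof (intro exI)
      have "0 = (\<Sum>i<Suc l. a' i * \<beta> i j)" using br j by simp
      also have "\<dots> = a' 0 * \<beta> 0 j + (\<Sum>i<l. a' (Suc i) * \<beta> (Suc i) j)"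
        by (rule sum.lessThan_Suc_shift)
      also have "\<dots> = x ^ t * (\<beta> 0 j * r * x ^ K - (\<Sum>i<l. \<beta> (Suc i) j * ys ! i ^ K) * x ^ k)"
        by (simp add: a'_def sum_negf sum_distrib_left sum_distrib_right right_diff_distrib ac_simps)
      finally show "prod_list ys ^ t * (\<beta> 0 j * r * prod_list ys ^ K -
         (\<Sum>i<length ys. \<beta> (Suc i) j * ys ! i ^ K) * prod_list ys ^ k) = 0"
        by (simp add: x_def l_def)
    qed
    then show False using H j(2) by simp
  qed
  then show ?thesis unfolding cech_top_local_nonzero_def by blast
qed

lemma param_map:
  fixes f :: "'a::comm_ring_1 \<Rightarrow> 'b::comm_ring_1"
  assumes ff: "faithfully_flat_hom f" and ps: "parameter_seq ys"
  shows "parameter_seq (map f ys)"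
proof (cases "ys = []")
  case True then show ?thesis unfolding parameter_seq_def by simp
next
  case False
  have hom: "ring_homo f" and fl: "flat_hom f" using ff unfolding faithfully_flat_hom_def by auto
  have wp: "weakly_proregular ys" and gU: "gen_ideal ys \<noteq> UNIV"
    and loc: "\<And>p. prime_ideal p \<Longrightarrow> gen_ideal ys \<subseteq> p \<Longrightarrow> cech_top_local_nonzero ys p"
    using ps False unfolding parameter_seq_def by auto
  have "gen_ideal (map f ys) \<noteq> UNIV"
  proof
    assume "gen_ideal (map f ys) = UNIV"
    then have "f 1 \<in> gen_ideal (map f ys)" by simp
    then have "1 \<in> gen_ideal ys" by (rule contraction[OF ff])
    then show False using ideal_one[OF is_ideal_gen] gU by blast
  qed
  moreover have "cech_top_local_nonzero (map f ys) q"
    if q: "prime_ideal q" "gen_ideal (map f ys) \<subseteq> q" for q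
  proof (rule cech_map[OF hom fl q(1)])
    have "gen_ideal ys \<subseteq> f -` q" using gen_ideal_map[OF hom] q(2) by blast
    then show "cech_top_local_nonzero ys (f -` q)"
      by (rule loc[OF preimage_prime[OF hom q(1)]])
  qed
  ultimately show ?thesis using wpr_map[OF hom fl wp] unfolding parameter_seq_def by blast
qed

theorem proposition4p5:
  fixes f :: "'a::comm_ring_1 \<Rightarrow> 'b::comm_ring_1"
  assumes "faithfully_flat_hom f"
    and "cohen_macaulay TYPE('b)"
  shows "cohen_macaulay TYPE('a)"
  unfolding cohen_macaulay_def
proof (intro allI impI)
  fix xs :: "'a list"
  assume sp: "strong_parameter_seq xs"
  have ff: "faithfully_flat_hom f" by (rule assms(1))
  have hom: "ring_homo f" using ff unfolding faithfully_flat_hom_def by auto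
  have "strong_parameter_seq (map f xs)"
    unfolding strong_parameter_seq_def
  proof
    fix i assume i: "i \<in> {1..length (map f xs)}"
    then have "parameter_seq (take i xs)" using sp unfolding strong_parameter_seq_def by simp
    then have "parameter_seq (map f (take i xs))" by (rule param_map[OF ff])
    then show "parameter_seq (take i (map f xs))" by (simp add: take_map)
  qed
  then have rs: "regular_seq (map f xs)" using assms(2) unfolding cohen_macaulay_def by blast
  show "regular_seq xs"
    unfolding regular_seq_def
  proof (intro conjI allI impI)
    fix i a assume i: "i < length xs" and xa: "xs ! i * a \<in> gen_ideal (take i xs)"
    have "f (xs ! i * a) \<in> gen_ideal (map f (take i xs))" by (rule gen_ideal_map[OF hom xa])
    then have "map f xs ! i * f a \<in> gen_ideal (take i (map f xs))"
      using i by (simp add: h_mult[OF hom] take_map)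
    then have "f a \<in> gen_ideal (take i (map f xs))" using rs i unfolding regular_seq_def by simp
    then have "f a \<in> gen_ideal (map f (take i xs))" by (simp add: take_map)
    then show "a \<in> gen_ideal (take i xs)" by (rule contraction[OF ff])
  next
    show "gen_ideal xs \<noteq> UNIV"
    proof
      assume "gen_ideal xs = UNIV"
      then have "f 1 \<in> gen_ideal (map f xs)" using gen_ideal_map[OF hom] by blast
      then have "gen_ideal (map f xs) = UNIV" using ideal_one[OF is_ideal_gen] by (simp add: h_one[OF hom])
      then show False using rs unfolding regular_seq_def by blast
    qed
  qed
qed

end
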